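(* Let $f(\cdot;\theta):\mathbb{R}^d\to\mathbb{R}$ be a model with parameters $\theta\in\mathbb{R}^p$, let $x_1,\dots,x_n\in\mathbb{R}^d$ be training inputs with labels $y_i$, and let $\theta^*$ be a global minimum of the empirical risk with zero loss, i.e. $f(x_i;\theta^* )=y_i$ for all $i\in[n]$, at which $f(x_i;\cdot)$ is differentiable for every $i$. Fix a learning rate $\eta>0$. If $\theta^*$ is linearly stable for SGD with learning rate $\eta$, then $$\operatorname{tr}(G(\theta^* ))\le \frac{2}{\eta}.$$
   Context: The empirical Fisher matrix is $G(\theta)=\frac1n\sum_{i=1}^n \nabla_\theta f(x_i;\theta)\nabla_\theta f(x_i;\theta)^T$. Linearized SGD (batch size 1) at $\theta^*$ is the random recursion $\delta_{t+1}=\delta_t-\eta\,\nabla_\theta f(x_{i_t};\theta^* )\nabla_\theta f(x_{i_t};\theta^* )^T\delta_t$, where $i_0,i_1,\dots$ are i.i.d. uniform on $[n]=\{1,\dots,n\}$ and independent of $\delta_0$. The global minimum $\theta^*$ is called linearly stable (for SGD with learning rate $\eta$) if for every distribution of the initial deviation $\delta_0\in\mathbb{R}^p$ (with finite second moment) and every $t\in\mathbb{N}$, the solution of this recursion satisfies $\|\mathbb{E}[\delta_t\delta_t^T]\|_F\le\|\mathbb{E}[\delta_0\delta_0^T]\|_F$. *)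

theory Defs
  imports "HOL-Probability.Probability"
begin

definition outer :: "real^'p \<Rightarrow> real^'p \<Rightarrow> real^'p^'p" where
  "outer u v = (\<chi> a b. u $ a * v $ b)"

text \<open>Empirical Fisher matrix G = (1/n) sum_i g_i g_i^T, where g_i are the
  parameter gradients at the training points (index set = finite type 'n, n = CARD('n)).\<close>
definition empirical_fisher :: "('n::finite \<Rightarrow> real^'p) \<Rightarrow> real^'p^'p" where
  "empirical_fisher g = (1 / real CARD('n)) *\<^sub>R (\<Sum>i\<in>UNIV. outer (g i) (g i))"

definition frob_norm :: "real^'p^'p \<Rightarrow> real" where
  "frob_norm A = sqrt (\<Sum>a\<in>UNIV. \<Sum>b\<in>UNIV. (A $ a $ b)^2)"

fun lin_sgd :: "('n \<Rightarrow> real^'p) \<Rightarrow> real \<Rightarrow> (nat \<Rightarrow> 'n) \<Rightarrow> real^'p \<Rightarrow> nat \<Rightarrow> real^'p" where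
  "lin_sgd g \<eta> i \<delta>0 0 = \<delta>0"
| "lin_sgd g \<eta> i \<delta>0 (Suc t) =
     lin_sgd g \<eta> i \<delta>0 t - \<eta> *\<^sub>R ((g (i t) \<bullet> lin_sgd g \<eta> i \<delta>0 t) *\<^sub>R g (i t))"

definition second_moment :: "'s measure \<Rightarrow> ('s \<Rightarrow> real^'p) \<Rightarrow> real^'p^'p" where
  "second_moment M X = (\<chi> a b. integral\<^sup>L M (\<lambda>s. X s $ a * X s $ b))"

definition index_seq_measure :: "(nat \<Rightarrow> 'n::finite) measure" where
  "index_seq_measure = PiM UNIV (\<lambda>_. measure_pmf (pmf_of_set (UNIV :: 'n set)))"

definition linearly_stable :: "('n::finite \<Rightarrow> real^'p) \<Rightarrow> real \<Rightarrow> bool" where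
  "linearly_stable g \<eta> \<longleftrightarrow>
    (\<forall>\<mu> :: (real^'p) measure.
       prob_space \<mu> \<and> sets \<mu> = sets borel \<and> integrable \<mu> (\<lambda>v. (norm v)^2) \<longrightarrow>
       (\<forall>t. frob_norm (second_moment (\<mu> \<Otimes>\<^sub>M (index_seq_measure :: (nat \<Rightarrow> 'n) measure))
                 (\<lambda>(\<delta>0, i). lin_sgd g \<eta> i \<delta>0 t))
            \<le> frob_norm (second_moment \<mu> (\<lambda>v. v))))"

end

theory Submission
  imports Defs
begin

lemma index_prob: "prob_space (index_seq_measure :: (nat \<Rightarrow> 'n::finite) measure)"
  unfolding index_seq_measure_def
  by (intro prob_space_PiM measure_pmf.prob_space_axioms)

lemma index_comp:
  fixes F :: "'n::finite \<Rightarrow> real"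
  shows "(\<integral>i. F (i 0) \<partial>(index_seq_measure :: (nat \<Rightarrow> 'n) measure)) = (\<Sum>j\<in>UNIV. F j) / real CARD('n)"
proof -
  let ?Q = "measure_pmf (pmf_of_set (UNIV :: 'n set))"
  have d: "distr (index_seq_measure :: (nat \<Rightarrow> 'n) measure) ?Q (\<lambda>i. i 0) = ?Q"
    unfolding index_seq_measure_def
    by (rule distr_PiM_component) (auto intro: measure_pmf.prob_space_axioms)
  have m: "(\<lambda>i. i 0) \<in> measurable (index_seq_measure :: (nat \<Rightarrow> 'n) measure) ?Q"
    unfolding index_seq_measure_def by measurable
  have "(\<integral>i. F (i 0) \<partial>(index_seq_measure :: (nat \<Rightarrow> 'n) measure)) = (\<integral>j. F j \<partial>?Q)"
    by (subst d[symmetric], subst integral_distr[OF m]) auto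
  also have "\<dots> = (\<Sum>j\<in>UNIV. F j) / real CARD('n)"
    by (subst integral_pmf_of_set) auto
  finally show ?thesis .
qed


lemma pair_int:
  fixes F :: "'p::finite \<Rightarrow> 'n::finite \<Rightarrow> real"
  shows "(\<integral>z. F (fst z) (snd z 0) \<partial>(measure_pmf (pmf_of_set (UNIV::'p set)) \<Otimes>\<^sub>M (index_seq_measure :: (nat \<Rightarrow> 'n) measure)))
     = (\<Sum>a\<in>UNIV. (\<Sum>j\<in>UNIV. F a j) / real CARD('n)) / real CARD('p)"
proof -
  let ?P = "measure_pmf (pmf_of_set (UNIV::'p set))"
  let ?N = "index_seq_measure :: (nat \<Rightarrow> 'n) measure"
  interpret N: prob_space ?N by (rule index_prob)
  interpret PN: pair_sigma_finite ?P ?N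
    by (intro pair_sigma_finite.intro measure_pmf.sigma_finite_measure_axioms N.sigma_finite_measure_axioms)
  interpret PNp: prob_space "?P \<Otimes>\<^sub>M ?N"
    by (intro prob_space_pair measure_pmf.prob_space_axioms N.prob_space_axioms)
  define B where "B = (\<Sum>a\<in>UNIV. \<Sum>j\<in>UNIV. \<bar>F a j\<bar>)"
  have bnd: "\<bar>F a j\<bar> \<le> B" for a j
  proof -
    have "\<bar>F a j\<bar> \<le> (\<Sum>j\<in>UNIV. \<bar>F a j\<bar>)" by (rule member_le_sum) auto
    also have "\<dots> \<le> B" unfolding B_def by (rule member_le_sum[where f="\<lambda>a. \<Sum>j\<in>UNIV. \<bar>F a j\<bar>"]) (auto intro: sum_nonneg)
    finally show ?thesis .
  qed
  have meas: "(\<lambda>z. F (fst z) (snd z 0)) \<in> borel_measurable (?P \<Otimes>\<^sub>M ?N)"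
    unfolding index_seq_measure_def by measurable
  have int: "integrable (?P \<Otimes>\<^sub>M ?N) (\<lambda>z. F (fst z) (snd z 0))"
    by (rule PNp.integrable_const_bound[where B=B]) (auto simp: bnd meas)
  have "(\<integral>z. F (fst z) (snd z 0) \<partial>(?P \<Otimes>\<^sub>M ?N)) = (\<integral>a. (\<integral>i. F a (i 0) \<partial>?N) \<partial>?P)"
    using PN.integral_fst'[OF int] by simp
  also have "\<dots> = (\<integral>a. (\<Sum>j\<in>UNIV. F a j) / real CARD('n) \<partial>?P)"
    by (simp add: index_comp)
  also have "\<dots> = (\<Sum>a\<in>UNIV. (\<Sum>j\<in>UNIV. F a j) / real CARD('n)) / real CARD('p)"
    by (subst integral_pmf_of_set) auto
  finally show ?thesis .
qed


lemma lin1: "lin_sgd g \<eta> i \<delta>0 (Suc 0) = \<delta>0 - \<eta> *\<^sub>R ((g (i 0) \<bullet> \<delta>0) *\<^sub>R g (i 0))"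
  by simp

lemma meas_fst_comp[measurable]:
  "(\<lambda>x. fst x $ a) \<in> borel_measurable ((borel :: (real^'p) measure) \<Otimes>\<^sub>M (M :: 'b measure))"
proof -
  have "(\<lambda>v::real^'p. v $ a) \<in> borel_measurable borel"
    by (intro borel_measurable_continuous_onI continuous_intros)
  then show ?thesis by (rule measurable_compose[OF measurable_fst])
qed

lemma meas_snd_comp[measurable]:
  fixes h :: "'n \<Rightarrow> real"
  shows "(\<lambda>x. h (snd x 0)) \<in> borel_measurable (K \<Otimes>\<^sub>M PiM UNIV (\<lambda>_. measure_pmf (Q :: 'n pmf)))"
proof -
  have "(\<lambda>i. i 0) \<in> measurable (PiM UNIV (\<lambda>_. measure_pmf Q)) (measure_pmf Q)" by measurable
  moreover have "h \<in> borel_measurable (measure_pmf Q)" by simp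
  ultimately have "(\<lambda>i. h (i 0)) \<in> borel_measurable (PiM UNIV (\<lambda>_. measure_pmf Q))"
    by (rule measurable_compose)
  then show ?thesis by (rule measurable_compose[OF measurable_snd])
qed

lemma test_meas:
  fixes g :: "'n::finite \<Rightarrow> real^'p"
  shows "(\<lambda>s. (case s of (\<delta>0, i) \<Rightarrow> lin_sgd g \<eta> i \<delta>0 (Suc 0)) $ a * (case s of (\<delta>0, i) \<Rightarrow> lin_sgd g \<eta> i \<delta>0 (Suc 0)) $ a)
     \<in> borel_measurable (borel \<Otimes>\<^sub>M (index_seq_measure :: (nat \<Rightarrow> 'n) measure))"
proof -
  have e: "(\<lambda>s. (case s of (\<delta>0, i) \<Rightarrow> lin_sgd g \<eta> i \<delta>0 (Suc 0)) $ a * (case s of (\<delta>0, i) \<Rightarrow> lin_sgd g \<eta> i \<delta>0 (Suc 0)) $ a)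
    = (\<lambda>s. (fst s $ a - \<eta> * (\<Sum>b\<in>UNIV. g (snd s 0) $ b * fst s $ b) * g (snd s 0) $ a) * 
           (fst s $ a - \<eta> * (\<Sum>b\<in>UNIV. g (snd s 0) $ b * fst s $ b) * g (snd s 0) $ a))"
    by (auto simp: inner_vec_def split: prod.splits)
  show ?thesis unfolding e index_seq_measure_def
    by measurable
qed


lemma main:
  fixes g :: "'n::finite \<Rightarrow> real^'p" and \<eta> :: real
  assumes eta_pos: "\<eta> > 0" and stable: "linearly_stable g \<eta>"
  shows "trace (empirical_fisher g) \<le> 2 / \<eta>"
proof -
  let ?P = "measure_pmf (pmf_of_set (UNIV::'p set))"
  let ?N = "index_seq_measure :: (nat \<Rightarrow> 'n) measure"
  define \<phi> where "\<phi> = (\<lambda>c::'p. axis c (1::real))"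
  define \<mu> where "\<mu> = distr ?P borel \<phi>"
  define p where "p = real CARD('p)"
  define n where "n = real CARD('n)"
  have p_pos: "p > 0" and n_pos: "n > 0" unfolding p_def n_def by auto
  have phim: "\<phi> \<in> measurable ?P borel" by simp
  have mu_prob: "prob_space \<mu>" unfolding \<mu>_def
    by (rule measure_pmf.prob_space_distr[OF phim])
  have mu_sets: "sets \<mu> = sets borel" unfolding \<mu>_def by simp
  have mu_int: "integrable \<mu> (\<lambda>v. (norm v)^2)" unfolding \<mu>_def
    by (subst integrable_distr_eq[OF phim]) (auto intro: integrable_measure_pmf_finite)
  let ?X = "\<lambda>s. case s of (\<delta>0, i) \<Rightarrow> lin_sgd g \<eta> i \<delta>0 (Suc 0)"
  have st: "frob_norm (second_moment (\<mu> \<Otimes>\<^sub>M ?N) ?X) \<le> frob_norm (second_moment \<mu> (\<lambda>v. v))"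
    using stable mu_prob mu_sets mu_int unfolding linearly_stable_def by blast
  have sm0: "second_moment \<mu> (\<lambda>v. v) $ a $ b = (if a = b then 1 / p else 0)" for a b
  proof -
    have mb: "(\<lambda>v::real^'p. v $ a * v $ b) \<in> borel_measurable borel"
      by (intro borel_measurable_continuous_onI continuous_intros)
    have "second_moment \<mu> (\<lambda>v. v) $ a $ b = (\<integral>c. \<phi> c $ a * \<phi> c $ b \<partial>?P)"
      unfolding second_moment_def \<mu>_def by (simp add: integral_distr[OF phim mb])
    also have "\<dots> = (\<Sum>c\<in>UNIV. \<phi> c $ a * \<phi> c $ b) / p"
      unfolding p_def by (subst integral_pmf_of_set) auto
    also have "\<dots> = (if a = b then 1 / p else 0)"
    proof -
      have "\<phi> c $ a * \<phi> c $ b = (if c = a then (if a = b then 1 else 0) else 0)" for c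
        by (auto simp: \<phi>_def axis_def)
      then show ?thesis by simp
    qed
    finally show ?thesis .
  qed
  have f0: "frob_norm (second_moment \<mu> (\<lambda>v. v)) = sqrt (1 / p)"
  proof -
    have "(\<Sum>a\<in>UNIV. \<Sum>b\<in>UNIV. (second_moment \<mu> (\<lambda>v. v) $ a $ b)^2) = (\<Sum>a\<in>(UNIV::'p set). (1/p)^2)"
    proof -
      have "(second_moment \<mu> (\<lambda>v. v) $ a $ b)^2 = (if a = b then (1/p)^2 else 0)" for a b
        by (simp add: sm0)
      then show ?thesis by simp
    qed
    also have "\<dots> = 1 / p" using p_pos unfolding p_def by (simp add: power2_eq_square)
    finally show ?thesis unfolding frob_norm_def by simp
  qed
  have did: "distr ?N ?N (\<lambda>x. x) = ?N" by (rule distr_id)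
  interpret N: prob_space ?N by (rule index_prob)
  have eqm: "\<mu> \<Otimes>\<^sub>M ?N = distr (?P \<Otimes>\<^sub>M ?N) (borel \<Otimes>\<^sub>M ?N) (\<lambda>(x, y). (\<phi> x, y))"
    using pair_measure_distr[OF phim measurable_ident_sets[OF refl, of ?N]]
    unfolding \<mu>_def did using N.sigma_finite_measure_axioms by simp
  have pm: "(\<lambda>(x, y). (\<phi> x, y)) \<in> measurable (?P \<Otimes>\<^sub>M ?N) (borel \<Otimes>\<^sub>M ?N)"
    by measurable
  define F where "F = (\<lambda>a c j. ((\<phi> c - \<eta> *\<^sub>R ((g j \<bullet> \<phi> c) *\<^sub>R g j)) $ a)^2)"
  define S where "S = second_moment (\<mu> \<Otimes>\<^sub>M ?N) ?X"
  have D: "S $ a $ a = (\<Sum>c\<in>UNIV. (\<Sum>j\<in>UNIV. F a c j) / n) / p" for a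
  proof -
    have "S $ a $ a = (\<integral>z. ?X z $ a * ?X z $ a \<partial>(\<mu> \<Otimes>\<^sub>M ?N))"
      unfolding S_def second_moment_def by simp
    also have "\<dots> = (\<integral>z. ?X ((\<lambda>(x, y). (\<phi> x, y)) z) $ a * ?X ((\<lambda>(x, y). (\<phi> x, y)) z) $ a \<partial>(?P \<Otimes>\<^sub>M ?N))"
      unfolding eqm by (rule integral_distr[OF pm test_meas])
    also have "\<dots> = (\<integral>z. F a (fst z) (snd z 0) \<partial>(?P \<Otimes>\<^sub>M ?N))"
      by (rule Bochner_Integration.integral_cong) (auto simp: F_def power2_eq_square split: prod.splits)
    also have "\<dots> = (\<Sum>c\<in>UNIV. (\<Sum>j\<in>UNIV. F a c j) / n) / p"
      unfolding n_def p_def by (rule pair_int)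
    finally show ?thesis .
  qed
  define s where "s = (\<lambda>j. \<Sum>c\<in>UNIV. (g j $ c)^2)"
  have Fpt: "F a c j = \<eta>^2 * (g j $ c)^2 * (g j $ a)^2 + (if a = c then 1 - 2 * \<eta> * (g j $ c)^2 else 0)" for a c j
  proof -
    have "g j \<bullet> \<phi> c = g j $ c" unfolding \<phi>_def by (simp add: inner_axis)
    moreover have "\<phi> c $ a = (if a = c then 1 else 0)" unfolding \<phi>_def by (simp add: axis_def)
    ultimately show ?thesis unfolding F_def by (auto simp: power2_eq_square algebra_simps)
  qed
  have Fa: "(\<Sum>a\<in>UNIV. F a c j) = \<eta>^2 * (g j $ c)^2 * s j + 1 - 2 * \<eta> * (g j $ c)^2" for c j
    unfolding Fpt s_def by (simp add: sum.distrib sum_distrib_left)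
  have Fca: "(\<Sum>c\<in>UNIV. \<Sum>a\<in>UNIV. F a c j) = p + \<eta>^2 * (s j)^2 - 2 * \<eta> * s j" for j
    unfolding Fa by (simp add: sum.distrib sum_subtractf sum_distrib_left sum_distrib_right[symmetric] s_def p_def power2_eq_square algebra_simps)
  have trS: "(\<Sum>a\<in>UNIV. S $ a $ a) = (\<Sum>j\<in>UNIV. p + \<eta>^2 * (s j)^2 - 2 * \<eta> * s j) / (n * p)"
  proof -
    have "(\<Sum>a\<in>UNIV. S $ a $ a) = (\<Sum>a\<in>UNIV. \<Sum>c\<in>UNIV. \<Sum>j\<in>UNIV. F a c j) / (n * p)"
      unfolding D by (simp add: sum_divide_distrib)
    also have "(\<Sum>a\<in>UNIV. \<Sum>c\<in>UNIV. \<Sum>j\<in>UNIV. F a c j) = (\<Sum>c\<in>UNIV. \<Sum>a\<in>UNIV. \<Sum>j\<in>UNIV. F a c j)"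
      by (rule sum.swap)
    also have "\<dots> = (\<Sum>c\<in>UNIV. \<Sum>j\<in>UNIV. \<Sum>a\<in>UNIV. F a c j)"
      by (rule sum.cong[OF refl], rule sum.swap)
    also have "\<dots> = (\<Sum>j\<in>UNIV. \<Sum>c\<in>UNIV. \<Sum>a\<in>UNIV. F a c j)"
      by (rule sum.swap)
    finally show ?thesis by (simp add: Fca)
  qed
  have trG: "trace (empirical_fisher g) = (\<Sum>j\<in>UNIV. s j) / n"
  proof -
    have "trace (empirical_fisher g) = (\<Sum>a\<in>UNIV. (1 / n) * (\<Sum>j\<in>UNIV. g j $ a * g j $ a))"
      unfolding trace_def empirical_fisher_def outer_def n_def by (simp add: sum_component)
    also have "\<dots> = (1 / n) * (\<Sum>a\<in>UNIV. \<Sum>j\<in>UNIV. g j $ a * g j $ a)"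
      by (simp add: sum_distrib_left)
    also have "(\<Sum>a\<in>UNIV. \<Sum>j\<in>UNIV. g j $ a * g j $ a) = (\<Sum>j\<in>UNIV. \<Sum>a\<in>UNIV. g j $ a * g j $ a)"
      by (rule sum.swap)
    finally show ?thesis unfolding s_def by (simp add: power2_eq_square)
  qed
  have fS: "frob_norm S \<le> sqrt (1 / p)" using st f0 unfolding S_def by simp
  have sq: "(\<Sum>a\<in>UNIV. \<Sum>b\<in>UNIV. (S $ a $ b)^2) \<le> 1 / p"
    using fS unfolding frob_norm_def by (simp add: real_sqrt_le_iff)
  have diag: "(\<Sum>a\<in>UNIV. (S $ a $ a)^2) \<le> (\<Sum>a\<in>UNIV. \<Sum>b\<in>UNIV. (S $ a $ b)^2)"
    by (rule sum_mono, rule member_le_sum) auto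
  have cs: "(\<Sum>a\<in>UNIV. S $ a $ a)^2 \<le> (\<Sum>a\<in>UNIV. (S $ a $ a)^2) * p"
    using sum_squared_le_sum_of_squares[of "\<lambda>a. S $ a $ a" UNIV] unfolding p_def by simp
  have "(\<Sum>a\<in>UNIV. S $ a $ a)^2 \<le> (1 / p) * p"
    using cs diag sq p_pos by (meson order_trans mult_right_mono less_imp_le)
  then have "(\<Sum>a\<in>UNIV. S $ a $ a)^2 \<le> 1^2" using p_pos by simp
  then have tr1: "(\<Sum>a\<in>UNIV. S $ a $ a) \<le> 1"
    by (rule power2_le_imp_le) simp
  have "(\<Sum>j\<in>UNIV. p + \<eta>^2 * (s j)^2 - 2 * \<eta> * s j) \<le> n * p"
    using tr1 unfolding trS using n_pos p_pos by (simp add: divide_le_eq)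
  moreover have "(\<Sum>j\<in>UNIV. p + \<eta>^2 * (s j)^2 - 2 * \<eta> * s j) = n * p + \<eta>^2 * (\<Sum>j\<in>UNIV. (s j)^2) - 2 * \<eta> * (\<Sum>j\<in>UNIV. s j)"
    unfolding n_def by (simp add: sum.distrib sum_subtractf sum_distrib_left)
  ultimately have "\<eta> * (\<eta> * (\<Sum>j\<in>UNIV. (s j)^2)) \<le> \<eta> * (2 * (\<Sum>j\<in>UNIV. s j))"
    by (simp add: power2_eq_square algebra_simps)
  then have k1: "\<eta> * (\<Sum>j\<in>UNIV. (s j)^2) \<le> 2 * (\<Sum>j\<in>UNIV. s j)"
    using eta_pos by simp
  have k2: "(\<Sum>j\<in>UNIV. s j)^2 \<le> (\<Sum>j\<in>UNIV. (s j)^2) * n"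
    using sum_squared_le_sum_of_squares[of s UNIV] unfolding n_def by simp
  define A where "A = (\<Sum>j\<in>UNIV. s j)"
  have A0: "A \<ge> 0" unfolding A_def s_def by (intro sum_nonneg) auto
  have "\<eta> * A^2 \<le> 2 * A * n"
  proof -
    have "\<eta> * A^2 \<le> \<eta> * ((\<Sum>j\<in>UNIV. (s j)^2) * n)" using k2 eta_pos unfolding A_def by simp
    also have "\<dots> = (\<eta> * (\<Sum>j\<in>UNIV. (s j)^2)) * n" by simp
    also have "\<dots> \<le> (2 * A) * n" using k1 n_pos unfolding A_def by simp
    finally show ?thesis .
  qed
  then have "A / n \<le> 2 / \<eta>"
  proof (cases "A = 0")
    case True then show ?thesis using eta_pos by simp
  next
    case False
    then have "A > 0" using A0 by simp
    with \<open>\<eta> * A^2 \<le> 2 * A * n\<close> have "\<eta> * A \<le> 2 * n"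
      by (simp add: power2_eq_square algebra_simps)
    then show ?thesis using eta_pos n_pos by (simp add: field_simps)
  qed
  then show ?thesis unfolding trG A_def .
qed

theorem proposition3p2:
  fixes f :: "real^'d \<Rightarrow> real^'p \<Rightarrow> real"
    and x :: "'n::finite \<Rightarrow> real^'d"
    and y :: "'n \<Rightarrow> real"
    and \<theta>star :: "real^'p"
    and g :: "'n \<Rightarrow> real^'p"
    and \<eta> :: real
  assumes interp: "\<And>i. f (x i) \<theta>star = y i"
    and grad: "\<And>i. (f (x i) has_derivative (\<lambda>h. g i \<bullet> h)) (at \<theta>star)"
    and eta_pos: "\<eta> > 0"
    and stable: "linearly_stable g \<eta>"
  shows "trace (empirical_fisher g) \<le> 2 / \<eta>"
  using main[OF eta_pos stable] .

end
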